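(* For every $m\ge1$ and $n\ge1$ there is an injective map from $Q_5(m,n)$ to $P_5(-m,n)$.
   Context: Partitions: $\lambda_1\ge\cdots\ge\lambda_\ell>0$, $\ell(\lambda)=\ell$, $\lambda_i=0$ for $i>\ell$, $s(\lambda)$ the smallest part with $s(\emptyset)=+\infty$. Rank $=\lambda_1-\ell$; rank-set $=[-\lambda_1,1-\lambda_2,\dots,\ell-1-\lambda_\ell,\ell,\ell+1,\dots]$. $Q(m,n)$: partitions of $n$ whose rank-set contains $m$; $P(-m,n)$: partitions of $n$ with rank $\ge-m$. $m$-Durfee rectangle symbol $(\alpha,\beta)_{(m+j)\times j}$ of $\lambda$: $j\ge0$ is the largest integer with $\lambda_{m+j}\ge j$; $\alpha$ is the conjugate of $(\lambda_1-j,\dots,\lambda_{m+j}-j)$ and $\beta=(\lambda_{m+j+1},\lambda_{m+j+2},\dots)$; $|\lambda|=|\alpha|+|\beta|+j(m+j)$. $Q_5(m,n)$ is the set of $\lambda\in Q(m,n)$ whose symbol has $j\ge1$, $\ell(\beta)-\ell(\alpha)\ge1$, $\alpha_1=\alpha_2=m+j>\alpha_3$ and $s(\beta)\ge2$. $P_5(-m,n)$ is the set of $\mu\in P(-m,n)$ whose symbol $(\gamma,\delta)_{(m+j')\times j'}$ has $j'\ge1$, $\ell(\gamma)=\ell(\delta)$, $\gamma_1\le m+j'-3$ and $\delta_1=j'$. *)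

theory Defs
  imports Main "HOL-Library.Extended_Nat"
begin

definition is_partition :: "nat list \<Rightarrow> bool" where
  "is_partition lam \<longleftrightarrow> sorted_wrt (\<ge>) lam \<and> (\<forall>x\<in>set lam. 0 < x)"

definition partitions :: "nat \<Rightarrow> nat list set" where
  "partitions n = {lam. is_partition lam \<and> sum_list lam = n}"

text \<open>The i-th part (1-indexed), zero beyond the length.\<close>
definition part :: "nat list \<Rightarrow> nat \<Rightarrow> nat" where
  "part lam i = (if 1 \<le> i \<and> i \<le> length lam then lam ! (i - 1) else 0)"

definition spart :: "nat list \<Rightarrow> enat" where
  "spart lam = (if lam = [] then \<infinity> else enat (Min (set lam)))"

definition rank :: "nat list \<Rightarrow> int" where
  "rank lam = int (part lam 1) - int (length lam)"

text \<open>Membership in the rank-set [-lam1, 1-lam2, ..., l-1-lam_l, l, l+1, ...]: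
  the k-th entry (k \<ge> 1) is k - 1 - lam_k.\<close>
definition in_rankset :: "int \<Rightarrow> nat list \<Rightarrow> bool" where
  "in_rankset x lam \<longleftrightarrow> (\<exists>k\<ge>1. int k - 1 - int (part lam k) = x)"

definition Qset :: "int \<Rightarrow> nat \<Rightarrow> nat list set" where
  "Qset m n = {lam \<in> partitions n. in_rankset m lam}"

definition Pneg :: "int \<Rightarrow> nat \<Rightarrow> nat list set" where
  "Pneg m n = {lam \<in> partitions n. rank lam \<ge> - m}"

definition conjugate :: "nat list \<Rightarrow> nat list" where
  "conjugate xs = map (\<lambda>i. length (filter (\<lambda>x. i \<le> x) xs)) [1..<Suc (foldr max xs 0)]"

definition durfee_j :: "nat \<Rightarrow> nat list \<Rightarrow> nat" where
  "durfee_j m lam = (GREATEST j. j \<le> part lam (m + j))"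

definition durfee_alpha :: "nat \<Rightarrow> nat list \<Rightarrow> nat list" where
  "durfee_alpha m lam = (let j = durfee_j m lam in
     conjugate (map (\<lambda>k. part lam k - j) [1..<Suc (m + j)]))"

definition durfee_beta :: "nat \<Rightarrow> nat list \<Rightarrow> nat list" where
  "durfee_beta m lam = drop (m + durfee_j m lam) lam"

definition Q5 :: "nat \<Rightarrow> nat \<Rightarrow> nat list set" where
  "Q5 m n = {lam \<in> Qset (int m) n.
     (let j = durfee_j m lam; a = durfee_alpha m lam; b = durfee_beta m lam in
        j \<ge> 1 \<and> int (length b) - int (length a) \<ge> 1 \<and>
        part a 1 = m + j \<and> part a 2 = m + j \<and> m + j > part a 3 \<and>
        spart b \<ge> 2)}"

definition P5 :: "nat \<Rightarrow> nat \<Rightarrow> nat list set" where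
  "P5 m n = {mu \<in> Pneg (int m) n.
     (let j' = durfee_j m mu; g = durfee_alpha m mu; d = durfee_beta m mu in
        j' \<ge> 1 \<and> length g = length d \<and>
        int (part g 1) \<le> int m + int j' - 3 \<and> part d 1 = j')}"

end

theory Submission
  imports Defs
begin

definition cnt :: "nat \<Rightarrow> nat list \<Rightarrow> nat" where
  "cnt k xs = length (filter (\<lambda>x. k \<le> x) xs)"

lemma conjugate_cnt: "conjugate xs = map (\<lambda>i. cnt i xs) [Suc 0..<Suc (foldr max xs 0)]"
  by (simp add: conjugate_def cnt_def)

lemma foldr_max_le: "(x::nat) \<in> set xs \<Longrightarrow> x \<le> foldr max xs 0"
  by (induction xs) (auto simp: le_max_iff_disj)

lemma foldr_max_bound: "\<forall>x\<in>set xs. x \<le> (B::nat) \<Longrightarrow> foldr max xs 0 \<le> B"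
  by (induction xs) (auto simp: max_def)

lemma foldr_max_dec: "sorted_wrt (\<ge>) ((x::nat)#xs) \<Longrightarrow> foldr max (x#xs) 0 = x"
proof -
  assume a: "sorted_wrt (\<ge>) (x#xs)"
  then have "foldr max xs 0 \<le> x" using foldr_max_bound[of xs x] by simp
  then show ?thesis by (simp add: max_def)
qed

lemma cnt_Cons: "cnt k (x#xs) = (if k \<le> x then Suc (cnt k xs) else cnt k xs)"
  by (simp add: cnt_def)

lemma cnt_le_length: "cnt k xs \<le> length xs"
  by (simp add: cnt_def)

lemma cnt_anti: "k \<le> k' \<Longrightarrow> cnt k' xs \<le> cnt k xs"
  by (induction xs) (auto simp: cnt_def)

lemma cnt_dec_iff:
  "sorted_wrt (\<ge>) xs \<Longrightarrow> (i < cnt k xs) = (i < length xs \<and> k \<le> xs ! i)"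
proof (induction xs arbitrary: i)
  case Nil
  then show ?case by (simp add: cnt_def)
next
  case (Cons x xs)
  show ?case
  proof (cases "k \<le> x")
    case True
    then show ?thesis using Cons by (cases i) (auto simp: cnt_Cons)
  next
    case False
    have "\<forall>y\<in>set xs. \<not> k \<le> y" using Cons.prems False by auto
    then have "cnt k xs = 0" by (simp add: cnt_def)
    moreover have "\<not> (i < length (x#xs) \<and> k \<le> (x#xs) ! i)"
    proof
      assume h: "i < length (x#xs) \<and> k \<le> (x#xs) ! i"
      show False
      proof (cases i)
        case 0 then show False using h False by simp
      next
        case (Suc i')
        then have "xs ! i' \<in> set xs" using h by simp
        then show False using \<open>\<forall>y\<in>set xs. \<not> k \<le> y\<close> h Suc by simp
      qed
    qed
    ultimately show ?thesis using False by (simp add: cnt_Cons)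
  qed
qed

lemma len_filter_le_upt: "length (filter (\<lambda>k. k \<le> v) [Suc 0..<Suc M]) = min v M"
  by (induction M) auto

lemma len_filter_cnt_upt:
  assumes "sorted_wrt (\<ge>) xs"
  shows "length (filter (\<lambda>k. Suc i \<le> cnt k xs) [Suc 0..<Suc M]) = (if i < length xs then min (xs!i) M else 0)"
proof -
  have "filter (\<lambda>k. Suc i \<le> cnt k xs) [Suc 0..<Suc M] = filter (\<lambda>k. i < length xs \<and> k \<le> xs ! i) [Suc 0..<Suc M]"
    using cnt_dec_iff[OF assms] by (intro filter_cong) (auto simp: Suc_le_eq)
  show ?thesis
  proof (cases "i < length xs")
    case True
    then have "filter (\<lambda>k. Suc i \<le> cnt k xs) [Suc 0..<Suc M] = filter (\<lambda>k. k \<le> xs ! i) [Suc 0..<Suc M]"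
      using \<open>filter _ _ = _\<close> by simp
    then show ?thesis using True len_filter_le_upt[of "xs!i" M] by (simp del: upt_Suc)
  next
    case False
    then have "filter (\<lambda>k. Suc i \<le> cnt k xs) [Suc 0..<Suc M] = []"
      using \<open>filter _ _ = _\<close> by simp
    then show ?thesis using False by (simp del: upt_Suc)
  qed
qed

lemma length_conj: "length (conjugate xs) = foldr max xs 0"
  by (simp add: conjugate_cnt)

lemma nth_conj: "i < length (conjugate xs) \<Longrightarrow> conjugate xs ! i = cnt (Suc i) xs"
  by (simp add: conjugate_cnt length_conj del: upt_Suc)

lemma cnt_conj:
  assumes "sorted_wrt (\<ge>) xs"
  shows "cnt (Suc i) (conjugate xs) = (if i < length xs then xs!i else 0)"
proof -
  have "cnt (Suc i) (conjugate xs) = length (filter (\<lambda>k. Suc i \<le> cnt k xs) [Suc 0..<Suc (foldr max xs 0)])"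
    by (simp add: conjugate_cnt cnt_def[of "Suc i"] filter_map comp_def del: upt_Suc)
  also have "\<dots> = (if i < length xs then min (xs!i) (foldr max xs 0) else 0)"
    by (rule len_filter_cnt_upt[OF assms])
  also have "\<dots> = (if i < length xs then xs!i else 0)"
    using foldr_max_le[of "xs!i" xs] by (auto simp: min_def)
  finally show ?thesis .
qed

lemma dec_map_cnt: "sorted_wrt (\<ge>) (map (\<lambda>i. c + cnt i xs) [a..<b])"
proof -
  have "sorted_wrt (\<lambda>x y. c + cnt y xs \<le> c + cnt x xs) [a..<b]"
    by (rule sorted_wrt_mono_rel[OF _ sorted_wrt_upt]) (simp add: cnt_anti)
  then show ?thesis by (simp add: sorted_wrt_map)
qed

lemma dec_conj: "sorted_wrt (\<ge>) (conjugate xs)"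
  using dec_map_cnt[of 0 xs 1 "Suc (foldr max xs 0)"] by (simp add: conjugate_cnt del: upt_Suc)

lemma conj_le_length: "x \<in> set (conjugate xs) \<Longrightarrow> x \<le> length xs"
  using cnt_le_length by (auto simp: conjugate_cnt)

lemma conj_pos:
  assumes "sorted_wrt (\<ge>) xs" "x \<in> set (conjugate xs)"
  shows "0 < x"
proof -
  obtain i where i: "i < length (conjugate xs)" "x = conjugate xs ! i"
    using assms(2) by (auto simp: in_set_conv_nth)
  have x: "x = cnt (Suc i) xs" using i nth_conj by simp
  have "i < foldr max xs 0" using i length_conj by simp
  then obtain y ys where xs: "xs = y # ys" by (cases xs) auto
  have "foldr max xs 0 = y" using foldr_max_dec assms(1) xs by simp
  then have "0 < cnt (Suc i) xs" using cnt_dec_iff[OF assms(1), of 0] \<open>i < foldr max xs 0\<close> xs by simp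
  then show ?thesis using x by simp
qed

lemma sum_ind: "sum_list (map (\<lambda>k. if P k then 1 else 0) ys) = length (filter P ys)"
  by (induction ys) auto

lemma sum_cnt:
  "\<forall>x\<in>set xs. x \<le> N \<Longrightarrow> (\<Sum>k\<leftarrow>[Suc 0..<Suc N]. cnt k xs) = sum_list xs"
proof (induction xs)
  case Nil
  then show ?case by (simp add: cnt_def)
next
  case (Cons x xs)
  have "(\<Sum>k\<leftarrow>[Suc 0..<Suc N]. cnt k (x#xs)) = (\<Sum>k\<leftarrow>[Suc 0..<Suc N]. (if k \<le> x then 1 else 0) + cnt k xs)"
    by (intro arg_cong[where f=sum_list] map_cong) (auto simp: cnt_Cons)
  also have "\<dots> = (\<Sum>k\<leftarrow>[Suc 0..<Suc N]. (if k \<le> x then 1 else 0)) + (\<Sum>k\<leftarrow>[Suc 0..<Suc N]. cnt k xs)"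
    by (simp add: sum_list_addf)
  also have "(\<Sum>k\<leftarrow>[Suc 0..<Suc N]. (if k \<le> x then 1 else 0)) = x"
    using Cons.prems by (simp add: sum_ind len_filter_le_upt del: upt_Suc)
  finally show ?case using Cons by simp
qed

lemma conj_cnt_map:
  assumes "sorted_wrt (\<ge>) g" "\<forall>x\<in>set g. 0 < x \<and> x \<le> N"
  shows "conjugate (map (\<lambda>i. cnt i g) [Suc 0..<Suc N]) = g"
proof (cases "N = 0")
  case True
  then have "g = []" using assms(2) by (cases g) auto
  then show ?thesis using True by (simp add: conjugate_def)
next
  case False
  let ?ys = "map (\<lambda>i. cnt i g) [Suc 0..<Suc N]"
  have ys: "?ys = cnt (Suc 0) g # map (\<lambda>i. cnt i g) [Suc (Suc 0)..<Suc N]"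
    using False by (simp add: upt_conv_Cons del: upt_Suc)
  have dys: "sorted_wrt (\<ge>) ?ys" using dec_map_cnt[of 0 g "Suc 0" "Suc N"] by (simp del: upt_Suc)
  have c1: "cnt (Suc 0) g = length g" using assms(2) by (simp add: cnt_def Suc_le_eq)
  have mx: "foldr max ?ys 0 = length g"
    using foldr_max_dec[of "cnt (Suc 0) g" "map (\<lambda>i. cnt i g) [Suc (Suc 0)..<Suc N]"] dys ys c1 by (simp del: upt_Suc)
  show ?thesis
  proof (rule nth_equalityI)
    show "length (conjugate ?ys) = length g" using mx length_conj by simp
  next
    fix i assume "i < length (conjugate ?ys)"
    then have i: "i < length g" "i < length (conjugate ?ys)" using mx length_conj by auto
    have "conjugate ?ys ! i = cnt (Suc i) ?ys" using nth_conj i by simp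
    also have "\<dots> = length (filter (\<lambda>k. Suc i \<le> cnt k g) [Suc 0..<Suc N])"
      by (simp add: cnt_def[of "Suc i"] filter_map comp_def del: upt_Suc)
    also have "\<dots> = min (g!i) N" using len_filter_cnt_upt[OF assms(1)] i by simp
    also have "\<dots> = g ! i" using assms(2) i nth_mem by fastforce
    finally show "conjugate ?ys ! i = g ! i" .
  qed
qed

definition build :: "nat \<Rightarrow> nat \<Rightarrow> nat list \<Rightarrow> nat list \<Rightarrow> nat list" where
  "build m jp g d = map (\<lambda>i. jp + cnt i g) [Suc 0..<Suc (m+jp)] @ d"

definition bok :: "nat \<Rightarrow> nat \<Rightarrow> nat list \<Rightarrow> nat list \<Rightarrow> bool" where
  "bok m jp g d \<longleftrightarrow> sorted_wrt (\<ge>) g \<and> (\<forall>x\<in>set g. 0 < x \<and> x \<le> m + jp) \<and>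
     sorted_wrt (\<ge>) d \<and> (\<forall>x\<in>set d. 0 < x \<and> x \<le> jp) \<and> 1 \<le> jp"

lemma part_mono:
  assumes "sorted_wrt (\<ge>) lam" "1 \<le> k" "k \<le> k'"
  shows "part lam k' \<le> part lam k"
proof (cases "k' \<le> length lam")
  case True
  show ?thesis
  proof (cases "k = k'")
    case False
    then have "lam ! (k'-1) \<le> lam ! (k-1)"
      using sorted_wrt_nth_less[OF assms(1), of "k-1" "k'-1"] True assms by simp
    then show ?thesis using True assms by (simp add: part_def)
  qed simp
next
  case False
  then show ?thesis by (simp add: part_def)
qed

lemma durfee_bound: "j \<le> part lam (m+j) \<Longrightarrow> j \<le> length lam"
  by (cases "j = 0") (auto simp: part_def split: if_splits)

lemma durfee_ge: "durfee_j m lam \<le> part lam (m + durfee_j m lam)"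
  unfolding durfee_j_def
  by (rule GreatestI_nat[of _ 0 "length lam"]) (auto intro: durfee_bound)

lemma durfee_max: "j \<le> part lam (m+j) \<Longrightarrow> j \<le> durfee_j m lam"
  unfolding durfee_j_def
  by (rule Greatest_le_nat[of _ j "length lam"]) (auto intro: durfee_bound)

lemma durfee_eq:
  assumes "jp \<le> part lam (m+jp)" "\<And>j. j \<le> part lam (m+j) \<Longrightarrow> j \<le> jp"
  shows "durfee_j m lam = jp"
proof (rule le_antisym)
  show "durfee_j m lam \<le> jp" using durfee_ge[of m lam] by (rule assms(2))
  show "jp \<le> durfee_j m lam" using assms(1) by (rule durfee_max)
qed

lemma length_build: "length (build m jp g d) = m + jp + length d"
  by (simp add: build_def del: upt_Suc)

lemma part_build_top:
  assumes "1 \<le> k" "k \<le> m + jp"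
  shows "part (build m jp g d) k = jp + cnt k g"
proof -
  have k: "k - 1 < m + jp" using assms by simp
  have len: "length (map (\<lambda>i. jp + cnt i g) [Suc 0..<Suc (m+jp)]) = m + jp" by (simp del: upt_Suc)
  have "part (build m jp g d) k = build m jp g d ! (k - 1)"
    using assms by (simp add: part_def length_build)
  also have "\<dots> = map (\<lambda>i. jp + cnt i g) [Suc 0..<Suc (m+jp)] ! (k - 1)"
    unfolding build_def using k len by (simp only: nth_append) (simp del: upt_Suc)
  also have "\<dots> = jp + cnt (Suc 0 + (k - 1)) g"
    using k by (simp del: upt_Suc)
  also have "Suc 0 + (k - 1) = k" using assms by simp
  finally show ?thesis .
qed

lemma part_build_bot:
  assumes "1 \<le> i"
  shows "part (build m jp g d) (m + jp + i) = part d i"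
proof (cases "i \<le> length d")
  case True
  have "part (build m jp g d) (m + jp + i) = build m jp g d ! (m + jp + i - 1)"
    using assms True by (simp add: part_def length_build)
  also have "m + jp + i - 1 = length (map (\<lambda>i. jp + cnt i g) [Suc 0..<Suc (m+jp)]) + (i - 1)"
    using assms by (simp del: upt_Suc)
  also have "build m jp g d ! \<dots> = d ! (i - 1)"
    unfolding build_def by (rule nth_append_length_plus)
  finally show ?thesis using assms True by (simp add: part_def)
next
  case False
  then show ?thesis by (simp add: part_def length_build)
qed

lemma part_le: "\<forall>x\<in>set d. x \<le> (B::nat) \<Longrightarrow> part d i \<le> B"
proof (cases "1 \<le> i \<and> i \<le> length d")
  case True
  assume a: "\<forall>x\<in>set d. x \<le> B"
  have "d ! (i - 1) \<in> set d" using True by (intro nth_mem) linarith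
  then show ?thesis using a True by (simp add: part_def)
qed (auto simp: part_def)

lemma sum_const_list: "(\<Sum>x\<leftarrow>xs. (c::nat)) = length xs * c"
  by (induction xs) auto

lemma build_partition:
  assumes "bok m jp g d"
  shows "is_partition (build m jp g d)"
proof -
  let ?top = "map (\<lambda>i. jp + cnt i g) [Suc 0..<Suc (m+jp)]"
  have s1: "sorted_wrt (\<ge>) ?top" by (rule dec_map_cnt)
  have t: "\<forall>x\<in>set ?top. jp \<le> x" by auto
  have ok: "sorted_wrt (\<ge>) d" "\<forall>x\<in>set d. 0 < x \<and> x \<le> jp" "1 \<le> jp"
    using assms by (auto simp: bok_def)
  have cross: "\<forall>x\<in>set ?top. \<forall>y\<in>set d. y \<le> x"
  proof (intro ballI)
    fix x y assume "x \<in> set ?top" "y \<in> set d"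
    then have "jp \<le> x" "y \<le> jp" using t ok(2) by auto
    then show "y \<le> x" by (rule order_trans[rotated])
  qed
  have "sorted_wrt (\<ge>) (?top @ d)"
    unfolding sorted_wrt_append using s1 ok(1) cross by blast
  moreover have "\<forall>x\<in>set (?top @ d). 0 < x" using ok t by fastforce
  ultimately show ?thesis unfolding is_partition_def build_def by (rule conjI)
qed

lemma build_sum:
  assumes "bok m jp g d"
  shows "sum_list (build m jp g d) = jp * (m + jp) + sum_list g + sum_list d"
proof -
  have g: "\<forall>x\<in>set g. x \<le> m + jp" using assms by (auto simp: bok_def)
  have "sum_list (map (\<lambda>i. jp + cnt i g) [Suc 0..<Suc (m+jp)])
      = (\<Sum>i\<leftarrow>[Suc 0..<Suc (m+jp)]. jp) + (\<Sum>i\<leftarrow>[Suc 0..<Suc (m+jp)]. cnt i g)"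
    by (simp add: sum_list_addf del: upt_Suc)
  also have "\<dots> = jp * (m + jp) + sum_list g"
    using sum_cnt[OF g] by (simp add: sum_const_list del: upt_Suc)
  finally show ?thesis by (simp add: build_def del: upt_Suc)
qed

lemma build_durfee:
  assumes "bok m jp g d"
  shows "durfee_j m (build m jp g d) = jp"
proof (rule durfee_eq)
  have "1 \<le> jp" using assms by (simp add: bok_def)
  then show "jp \<le> part (build m jp g d) (m + jp)" using part_build_top[of "m+jp" m jp g d] by simp
next
  fix j assume j: "j \<le> part (build m jp g d) (m + j)"
  show "j \<le> jp"
  proof (rule ccontr)
    assume "\<not> j \<le> jp"
    then have e: "m + j = m + jp + (j - jp)" "1 \<le> j - jp" by auto
    have "\<forall>x\<in>set d. x \<le> jp" using assms by (simp add: bok_def)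
    then have "part d (j - jp) \<le> jp" by (rule part_le)
    moreover have "part (build m jp g d) (m + j) = part d (j - jp)"
      unfolding e(1) by (rule part_build_bot[OF e(2)])
    ultimately have "part (build m jp g d) (m + j) \<le> jp" by simp
    then show False using j \<open>\<not> j \<le> jp\<close> by simp
  qed
qed

lemma alpha_eq:
  "durfee_alpha m lam = conjugate (map (\<lambda>k. part lam k - durfee_j m lam) [Suc 0..<Suc (m + durfee_j m lam)])"
  by (simp add: durfee_alpha_def Let_def del: upt_Suc)

lemma build_alpha:
  assumes "bok m jp g d"
  shows "durfee_alpha m (build m jp g d) = g"
proof -
  have "map (\<lambda>k. part (build m jp g d) k - jp) [Suc 0..<Suc (m + jp)] = map (\<lambda>k. cnt k g) [Suc 0..<Suc (m + jp)]"
    by (rule map_cong) (auto simp: part_build_top)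
  moreover have "conjugate (map (\<lambda>k. cnt k g) [Suc 0..<Suc (m + jp)]) = g"
    using assms by (intro conj_cnt_map) (auto simp: bok_def)
  ultimately show ?thesis using build_durfee[OF assms] alpha_eq[of m "build m jp g d"]
    by (simp only:)
qed

lemma build_beta:
  assumes "bok m jp g d"
  shows "durfee_beta m (build m jp g d) = d"
  using build_durfee[OF assms] by (simp add: durfee_beta_def build_def del: upt_Suc)

lemma build_part1:
  assumes "bok m jp g d"
  shows "part (build m jp g d) 1 = jp + length g"
proof -
  have "1 \<le> m + jp" using assms by (simp add: bok_def)
  then have "part (build m jp g d) 1 = jp + cnt 1 g" by (simp add: part_build_top)
  moreover have "cnt 1 g = length g" using assms by (auto simp: bok_def cnt_def Suc_le_eq)
  ultimately show ?thesis by simp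
qed

lemma decomp:
  assumes "is_partition lam" "1 \<le> durfee_j m lam"
  shows "lam = build m (durfee_j m lam) (durfee_alpha m lam) (durfee_beta m lam)"
proof -
  define j where "j = durfee_j m lam"
  define xs where "xs = map (\<lambda>k. part lam k - j) [Suc 0..<Suc (m + j)]"
  have dl: "sorted_wrt (\<ge>) lam" using assms(1) by (simp add: is_partition_def)
  have dxs: "sorted_wrt (\<ge>) xs"
  proof -
    have h: "part lam y - j \<le> part lam x - j" if "1 \<le> x" "x \<le> y" for x y
      using part_mono[OF dl that] by (rule diff_le_mono)
    have "sorted_wrt (\<lambda>k k'. part lam k' - j \<le> part lam k - j) [Suc 0..<Suc (m + j)]"
      by (rule sorted_wrt_mono_rel[OF _ sorted_wrt_upt]) (auto intro: h)
    then show ?thesis by (simp add: xs_def sorted_wrt_map del: upt_Suc)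
  qed
  have lxs: "length xs = m + j" by (simp add: xs_def del: upt_Suc)
  have jge: "j \<le> part lam (m + j)" unfolding j_def by (rule durfee_ge)
  have j1: "1 \<le> j" unfolding j_def by (rule assms(2))
  have ml: "m + j \<le> length lam"
    using jge j1 by (auto simp: part_def split: if_splits)
  have a: "durfee_alpha m lam = conjugate xs" unfolding xs_def j_def by (rule alpha_eq)
  have top: "map (\<lambda>i. j + cnt i (conjugate xs)) [Suc 0..<Suc (m+j)] = take (m + j) lam"
  proof (rule nth_equalityI)
    show "length (map (\<lambda>i. j + cnt i (conjugate xs)) [Suc 0..<Suc (m+j)]) = length (take (m + j) lam)"
      using ml by (simp only: length_map length_upt length_take)
  next
    fix i assume "i < length (map (\<lambda>i. j + cnt i (conjugate xs)) [Suc 0..<Suc (m+j)])"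
    then have i: "i < m + j" by (simp only: length_map length_upt)
    have "map (\<lambda>i. j + cnt i (conjugate xs)) [Suc 0..<Suc (m+j)] ! i = j + cnt (Suc i) (conjugate xs)"
      using i by (simp del: upt_Suc)
    also have "\<dots> = j + xs ! i" using cnt_conj[OF dxs] i lxs by simp
    also have "xs ! i = part lam (Suc i) - j" using i by (simp add: xs_def del: upt_Suc)
    also have "j + (part lam (Suc i) - j) = part lam (Suc i)"
      using part_mono[OF dl, of "Suc i" "m + j"] i jge by simp
    also have "\<dots> = take (m + j) lam ! i" using i ml by (simp add: part_def)
    finally show "map (\<lambda>i. j + cnt i (conjugate xs)) [Suc 0..<Suc (m+j)] ! i = take (m + j) lam ! i" .
  qed
  have "build m j (durfee_alpha m lam) (durfee_beta m lam) = map (\<lambda>i. j + cnt i (conjugate xs)) [Suc 0..<Suc (m+j)] @ drop (m + j) lam"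
    by (simp only: build_def a durfee_beta_def j_def[symmetric])
  also have "\<dots> = lam" by (simp only: top append_take_drop_id)
  finally show ?thesis by (simp only: j_def[symmetric])
qed

definition gamL :: "nat \<Rightarrow> nat \<Rightarrow> nat list \<Rightarrow> nat list \<Rightarrow> nat list" where
  "gamL m j ap b = map (\<lambda>x. x - 1) (filter (\<lambda>x. Suc j \<le> x) ap) @ map (\<lambda>x. x - 1) b @ replicate ((m - 1) div 2) 1"

definition delL :: "nat \<Rightarrow> nat \<Rightarrow> nat list \<Rightarrow> nat list \<Rightarrow> nat list" where
  "delL m j ap b = Suc j # map Suc (filter (\<lambda>x. \<not> Suc j \<le> x) ap) @ replicate ((m - 1) mod 2) 2 @
     replicate (length (gamL m j ap b) - 1 - length (filter (\<lambda>x. \<not> Suc j \<le> x) ap) - (m - 1) mod 2) 1"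

definition mok :: "nat \<Rightarrow> nat \<Rightarrow> nat list \<Rightarrow> nat list \<Rightarrow> bool" where
  "mok m j ap b \<longleftrightarrow> sorted_wrt (\<ge>) ap \<and> (\<forall>x\<in>set ap. 0 < x \<and> x < m + j) \<and>
     sorted_wrt (\<ge>) b \<and> (\<forall>x\<in>set b. 2 \<le> x \<and> x \<le> j) \<and> length ap + 2 \<le> length b \<and> 2 \<le> j \<and> 1 \<le> m"

lemma sorted_rep: "sorted_wrt (\<ge>) (replicate n (x::nat))"
  by (induction n) auto

lemma sorted_pred: "sorted_wrt (\<ge>) xs \<Longrightarrow> sorted_wrt (\<ge>) (map (\<lambda>x::nat. x - 1) xs)"
  by (induction xs) auto

lemma sorted_Suc: "sorted_wrt (\<ge>) xs \<Longrightarrow> sorted_wrt (\<ge>) (map Suc xs)"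
  by (induction xs) auto

lemma sum_pred: "\<forall>x\<in>set xs. 0 < x \<Longrightarrow> sum_list (map (\<lambda>x::nat. x - 1) xs) + length xs = sum_list xs"
  by (induction xs) auto

lemma sum_Suc: "sum_list (map Suc xs) = sum_list xs + length xs"
  by (induction xs) auto

lemma sum_filter_compl: "sum_list (filter P xs) + sum_list (filter (\<lambda>x. \<not> P x) xs) = sum_list (xs::nat list)"
  by (induction xs) auto

lemma Suc_pred_map: "\<forall>x\<in>set xs. 0 < x \<Longrightarrow> map Suc (map (\<lambda>x::nat. x - 1) xs) = xs"
  by (induction xs) auto

lemma filter_split:
  "sorted_wrt (\<ge>) xs \<Longrightarrow> filter (\<lambda>x. c \<le> x) xs @ filter (\<lambda>x. \<not> c \<le> (x::nat)) xs = xs"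
proof (induction xs)
  case (Cons x xs)
  show ?case
  proof (cases "c \<le> x")
    case True
    then show ?thesis using Cons by simp
  next
    case False
    have "\<forall>y\<in>set xs. \<not> c \<le> y" using Cons.prems False by auto
    then show ?thesis using False by simp
  qed
qed simp

lemma map_facts:
  assumes "mok m j ap b"
  shows "bok m (Suc j) (gamL m j ap b) (delL m j ap b)"
    and "\<forall>x\<in>set (gamL m j ap b). 0 < x \<and> x + 2 \<le> m + j"
    and "length (gamL m j ap b) = length (delL m j ap b)"
    and "sum_list (gamL m j ap b) + sum_list (delL m j ap b) = sum_list ap + sum_list b + (m - 1) + j"
    and "length b \<le> length (gamL m j ap b)"
proof -
  define F where "F = filter (\<lambda>x. Suc j \<le> x) ap"
  define F' where "F' = filter (\<lambda>x. \<not> Suc j \<le> x) ap"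
  define g where "g = (m - 1) div 2"
  define t where "t = (m - 1) mod 2"
  have ok: "sorted_wrt (\<ge>) ap" "\<forall>x\<in>set ap. 0 < x \<and> x < m + j" "sorted_wrt (\<ge>) b"
    "\<forall>x\<in>set b. 2 \<le> x \<and> x \<le> j" "length ap + 2 \<le> length b" "2 \<le> j" "1 \<le> m"
    using assms by (auto simp: mok_def)
  have gam: "gamL m j ap b = map (\<lambda>x. x - 1) F @ map (\<lambda>x. x - 1) b @ replicate g 1"
    by (simp add: gamL_def F_def g_def)
  define K where "K = length (gamL m j ap b) - 1 - length F' - t"
  have del: "delL m j ap b = Suc j # map Suc F' @ replicate t 2 @ replicate K 1"
    by (simp add: delL_def F'_def t_def K_def)
  have Fs: "\<forall>x\<in>set F. Suc j \<le> x \<and> x < m + j" using ok(2) by (auto simp: F_def)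
  have F's: "\<forall>x\<in>set F'. 0 < x \<and> x \<le> j" using ok(2) by (auto simp: F'_def)
  have sF: "sorted_wrt (\<ge>) F" using ok(1) by (simp add: F_def sorted_wrt_filter)
  have sF': "sorted_wrt (\<ge>) F'" using ok(1) by (simp add: F'_def sorted_wrt_filter)
  have lenF: "length F + length F' = length ap" unfolding F_def F'_def by (rule sum_length_filter_compl)
  have sumF: "sum_list F + sum_list F' = sum_list ap" unfolding F_def F'_def by (rule sum_filter_compl)
  have t1: "t \<le> 1" by (simp add: t_def)
  have mgt: "m - 1 = 2 * g + t" by (simp add: g_def t_def)
  have lg: "length (gamL m j ap b) = length F + length b + g" by (simp add: gam)
  have Kdef: "K + 1 + length F' + t = length (gamL m j ap b)"
    using lg lenF ok(5) t1 by (simp add: K_def)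
  have gs1: "sorted_wrt (\<ge>) (map (\<lambda>x. x - 1) F)" using sF by (rule sorted_pred)
  have gs2: "sorted_wrt (\<ge>) (map (\<lambda>x. x - 1) b)" using ok(3) by (rule sorted_pred)
  have gb: "\<forall>x\<in>set (gamL m j ap b). 0 < x \<and> x + 2 \<le> m + j"
  proof
    fix x assume "x \<in> set (gamL m j ap b)"
    then consider (a) "x \<in> set (map (\<lambda>x. x - 1) F)" | (b) "x \<in> set (map (\<lambda>x. x - 1) b)" | (c) "x = 1 \<and> g > 0"
      by (auto simp: gam)
    then show "0 < x \<and> x + 2 \<le> m + j"
    proof cases
      case a then show ?thesis using Fs ok(6) by fastforce
    next
      case b then show ?thesis using ok(4) ok(7) by auto
    next
      case c then show ?thesis using ok(6) ok(7) by auto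
    qed
  qed
  then show "\<forall>x\<in>set (gamL m j ap b). 0 < x \<and> x + 2 \<le> m + j" .
  have gsort: "sorted_wrt (\<ge>) (gamL m j ap b)"
  proof -
    have c1: "\<forall>x\<in>set (map (\<lambda>x. x - 1) b). \<forall>y\<in>set (replicate g (1::nat)). y \<le> x"
      using ok(4) by auto
    have p2: "sorted_wrt (\<ge>) (map (\<lambda>x. x - 1) b @ replicate g 1)"
      unfolding sorted_wrt_append by (intro conjI gs2 sorted_rep c1)
    have c2: "\<forall>x\<in>set (map (\<lambda>x. x - 1) F). \<forall>y\<in>set (map (\<lambda>x. x - 1) b @ replicate g 1). y \<le> x"
    proof (intro ballI)
      fix x y assume x: "x \<in> set (map (\<lambda>x. x - 1) F)" and y: "y \<in> set (map (\<lambda>x. x - 1) b @ replicate g 1)"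
      from x obtain x0 where "x0 \<in> set F" "x = x0 - 1" by auto
      then have "j \<le> x" using Fs by auto
      moreover have "y \<le> j"
      proof -
        from y have "y \<in> set (map (\<lambda>x. x - 1) b) \<or> y = 1" by (auto split: if_splits)
        then show ?thesis using ok(4) ok(6) by auto
      qed
      ultimately show "y \<le> x" by simp
    qed
    show ?thesis unfolding gam by (subst sorted_wrt_append) (intro conjI gs1 p2 c2)
  qed
  have dsort: "sorted_wrt (\<ge>) (delL m j ap b)"
  proof -
    have s1: "sorted_wrt (\<ge>) (map Suc F')" using sF' by (rule sorted_Suc)
    have c1: "\<forall>x\<in>set (replicate t (2::nat)). \<forall>y\<in>set (replicate K 1). y \<le> x" by auto
    have p1: "sorted_wrt (\<ge>) (replicate t (2::nat) @ replicate K 1)"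
      unfolding sorted_wrt_append by (intro conjI sorted_rep c1)
    have c2: "\<forall>x\<in>set (map Suc F'). \<forall>y\<in>set (replicate t (2::nat) @ replicate K 1). y \<le> x"
      using F's by fastforce
    have p2: "sorted_wrt (\<ge>) (map Suc F' @ replicate t 2 @ replicate K 1)"
      by (subst sorted_wrt_append) (intro conjI s1 p1 c2)
    have c3: "\<forall>y\<in>set (map Suc F' @ replicate t 2 @ replicate K 1). y \<le> Suc j"
      using F's ok(6) by fastforce
    show ?thesis unfolding del using p2 c3 by simp
  qed
  have dbound: "\<forall>x\<in>set (delL m j ap b). 0 < x \<and> x \<le> Suc j"
    unfolding del using F's ok(6) by fastforce
  show "bok m (Suc j) (gamL m j ap b) (delL m j ap b)"
    unfolding bok_def using gsort gb dsort dbound by fastforce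
  show "length (gamL m j ap b) = length (delL m j ap b)"
    using Kdef by (simp add: del)
  show "length b \<le> length (gamL m j ap b)" using lg by simp
  have e1: "sum_list (map (\<lambda>x. x - 1) F) + length F = sum_list F"
    using Fs by (intro sum_pred) auto
  have e2: "sum_list (map (\<lambda>x. x - 1) b) + length b = sum_list b"
    using ok(4) by (intro sum_pred) auto
  have sg: "sum_list (gamL m j ap b) = sum_list (map (\<lambda>x. x - 1) F) + sum_list (map (\<lambda>x. x - 1) b) + g"
    by (simp add: gam sum_list_replicate)
  have sd: "sum_list (delL m j ap b) = Suc j + (sum_list F' + length F') + 2 * t + K"
    by (simp add: del sum_list_replicate sum_Suc)
  show "sum_list (gamL m j ap b) + sum_list (delL m j ap b) = sum_list ap + sum_list b + (m - 1) + j"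
    using sg sd e1 e2 Kdef lg lenF sumF mgt by linarith
qed

lemma map_inj:
  assumes "mok m j ap1 b1" "mok m j ap2 b2"
    and "gamL m j ap1 b1 = gamL m j ap2 b2" "delL m j ap1 b1 = delL m j ap2 b2"
  shows "ap1 = ap2 \<and> b1 = b2"
proof -
  have j2: "2 \<le> j" using assms(1) by (simp add: mok_def)
  have filt: "filter (\<lambda>x. j \<le> x) (gamL m j ap b) = map (\<lambda>x. x - 1) (filter (\<lambda>x. Suc j \<le> x) ap)"
    if "mok m j ap b" for ap b
  proof -
    have "\<forall>x\<in>set b. 2 \<le> x \<and> x \<le> j" using that by (simp add: mok_def)
    then have "filter (\<lambda>x. j \<le> x) (map (\<lambda>x. x - 1) b) = []" by (auto simp: filter_empty_conv)
    moreover have "filter (\<lambda>x. j \<le> x) (replicate ((m - 1) div 2) (1::nat)) = []"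
      using j2 by (auto simp: filter_empty_conv)
    moreover have "filter (\<lambda>x. j \<le> x) (map (\<lambda>x. x - 1) (filter (\<lambda>x. Suc j \<le> x) ap)) = map (\<lambda>x. x - 1) (filter (\<lambda>x. Suc j \<le> x) ap)"
      by (rule filter_True) auto
    ultimately show ?thesis by (simp add: gamL_def)
  qed
  have pos: "\<forall>x\<in>set (filter (\<lambda>x. Suc j \<le> x) ap). 0 < x" for ap :: "nat list" by auto
  have F: "filter (\<lambda>x. Suc j \<le> x) ap1 = filter (\<lambda>x. Suc j \<le> x) ap2"
  proof -
    have "map (\<lambda>x. x - 1) (filter (\<lambda>x. Suc j \<le> x) ap1) = map (\<lambda>x. x - 1) (filter (\<lambda>x. Suc j \<le> x) ap2)"
      using filt[OF assms(1)] filt[OF assms(2)] assms(3) by simp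
    then have "map Suc (map (\<lambda>x. x - 1) (filter (\<lambda>x. Suc j \<le> x) ap1)) = map Suc (map (\<lambda>x. x - 1) (filter (\<lambda>x. Suc j \<le> x) ap2))"
      by simp
    then show ?thesis using Suc_pred_map[OF pos[of ap1]] Suc_pred_map[OF pos[of ap2]] by simp
  qed
  have b: "b1 = b2"
  proof -
    have "map (\<lambda>x. x - 1) b1 @ replicate ((m - 1) div 2) 1 = map (\<lambda>x. x - 1) b2 @ replicate ((m - 1) div 2) 1"
      using assms(3) F by (simp add: gamL_def)
    then have "map Suc (map (\<lambda>x. x - 1) b1) = map Suc (map (\<lambda>x. x - 1) b2)" by simp
    moreover have "\<forall>x\<in>set b1. 0 < x" "\<forall>x\<in>set b2. 0 < x"
      using assms(1,2) by (auto simp: mok_def)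
    ultimately show ?thesis using Suc_pred_map by metis
  qed
  have filt2: "filter (\<lambda>x. 2 \<le> x) (tl (delL m j ap b)) = map Suc (filter (\<lambda>x. \<not> Suc j \<le> x) ap) @ replicate ((m - 1) mod 2) 2"
    if "mok m j ap b" for ap b
  proof -
    have ap0: "\<forall>x\<in>set ap. 0 < x" using that by (simp add: mok_def)
    have "filter (\<lambda>x. 2 \<le> x) (map Suc (filter (\<lambda>x. \<not> Suc j \<le> x) ap)) = map Suc (filter (\<lambda>x. \<not> Suc j \<le> x) ap)"
      by (rule filter_True) (use ap0 in auto)
    moreover have "filter (\<lambda>x. 2 \<le> x) (replicate ((m - 1) mod 2) (2::nat)) = replicate ((m - 1) mod 2) 2"
      by (rule filter_True) auto
    moreover have "filter (\<lambda>x. 2 \<le> x) (replicate k (1::nat)) = []" for k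
      by (auto simp: filter_empty_conv)
    ultimately show ?thesis by (simp add: delL_def)
  qed
  have F': "filter (\<lambda>x. \<not> Suc j \<le> x) ap1 = filter (\<lambda>x. \<not> Suc j \<le> x) ap2"
  proof -
    have "map Suc (filter (\<lambda>x. \<not> Suc j \<le> x) ap1) @ replicate ((m - 1) mod 2) 2 = map Suc (filter (\<lambda>x. \<not> Suc j \<le> x) ap2) @ replicate ((m - 1) mod 2) 2"
      using filt2[OF assms(1)] filt2[OF assms(2)] assms(4) by simp
    then show ?thesis by simp
  qed
  have "ap1 = ap2"
  proof -
    have "sorted_wrt (\<ge>) ap1" "sorted_wrt (\<ge>) ap2" using assms(1,2) by (auto simp: mok_def)
    then show ?thesis using filter_split[of ap1 "Suc j"] filter_split[of ap2 "Suc j"] F F' by metis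
  qed
  then show ?thesis using b by simp
qed

lemma dec_xs:
  assumes "is_partition lam"
  shows "sorted_wrt (\<ge>) (map (\<lambda>k. part lam k - j) [Suc 0..<Suc N])"
proof -
  have dl: "sorted_wrt (\<ge>) lam" using assms by (simp add: is_partition_def)
  have h: "part lam y - j \<le> part lam x - j" if "1 \<le> x" "x \<le> y" for x y
    using part_mono[OF dl that] by (rule diff_le_mono)
  have "sorted_wrt (\<lambda>k k'. part lam k' - j \<le> part lam k - j) [Suc 0..<Suc N]"
    by (rule sorted_wrt_mono_rel[OF _ sorted_wrt_upt]) (auto intro: h)
  then show ?thesis by (simp add: sorted_wrt_map del: upt_Suc)
qed

lemma Q5_struct:
  assumes "lam \<in> Q5 m n" "1 \<le> m"
  shows "\<exists>j ap b. mok m j ap b \<and> durfee_j m lam = j \<and> durfee_alpha m lam = (m+j)#(m+j)#ap \<and>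
     durfee_beta m lam = j # b \<and> lam = build m j ((m+j)#(m+j)#ap) (j#b) \<and> sum_list lam = n"
proof -
  define j where "j = durfee_j m lam"
  define a where "a = durfee_alpha m lam"
  define b where "b = durfee_beta m lam"
  have P: "is_partition lam" "sum_list lam = n" "in_rankset (int m) lam"
    using assms(1) by (auto simp: Q5_def Qset_def partitions_def)
  have C: "1 \<le> j" "int (length b) - int (length a) \<ge> 1" "part a 1 = m + j" "part a 2 = m + j"
    "part a 3 < m + j" "spart b \<ge> 2"
    using assms(1) unfolding Q5_def Let_def j_def a_def b_def by auto
  have dl: "sorted_wrt (\<ge>) lam" using P(1) by (simp add: is_partition_def)
  have lam: "lam = build m j a b" unfolding j_def a_def b_def by (rule decomp[OF P(1) C(1)[unfolded j_def]])
  define xs where "xs = map (\<lambda>k. part lam k - j) [Suc 0..<Suc (m + j)]"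
  have axs: "a = conjugate xs" unfolding a_def xs_def j_def by (rule alpha_eq)
  have dxs: "sorted_wrt (\<ge>) xs" unfolding xs_def by (rule dec_xs[OF P(1)])
  have lxs: "length xs = m + j" by (simp add: xs_def del: upt_Suc)
  have da: "sorted_wrt (\<ge>) a" unfolding axs by (rule dec_conj)
  have apos: "\<forall>x\<in>set a. 0 < x" unfolding axs using conj_pos[OF dxs] by blast
  have ale: "\<forall>x\<in>set a. x \<le> m + j" unfolding axs using conj_le_length[of _ xs] lxs by auto
  have la2: "2 \<le> length a" using C(4) assms(2) by (auto simp: part_def split: if_splits)
  have a0: "a ! 0 = m + j" using C(3) la2 by (simp add: part_def)
  have a1: "a ! 1 = m + j" using C(4) la2 by (simp add: part_def)
  obtain x y ap where axy: "a = x # y # ap"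
  proof (cases a)
    case Nil then show ?thesis using la2 by simp
  next
    case (Cons x r) then show ?thesis using la2 that by (cases r) auto
  qed
  have xy: "x = m + j" "y = m + j" using a0 a1 axy by auto
  have sap: "sorted_wrt (\<ge>) ap" using da axy by simp
  have ap0: "\<forall>x\<in>set ap. 0 < x" using apos axy by simp
  have aplt: "\<forall>w\<in>set ap. w < m + j"
  proof (cases ap)
    case (Cons z rest)
    have "z < m + j" using C(5) axy Cons by (simp add: part_def)
    moreover have "\<forall>w\<in>set rest. w \<le> z" using sap Cons by simp
    ultimately show ?thesis using Cons by auto
  qed simp
  have lb: "length a + 1 \<le> length b" using C(2) by linarith
  have sb: "sorted_wrt (\<ge>) b" unfolding b_def durfee_beta_def using dl by simp
  obtain y0 tb where btb: "b = y0 # tb" using lb by (cases b) auto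
  have lam_len: "Suc (m + j) \<le> length lam"
    using btb unfolding b_def durfee_beta_def j_def[symmetric] by (cases "Suc (m + j) \<le> length lam") auto
  have y0p: "y0 = part lam (Suc (m + j))"
  proof -
    have "y0 = drop (m + j) lam ! 0" using btb unfolding b_def durfee_beta_def j_def[symmetric] by simp
    also have "\<dots> = lam ! (m + j)" using lam_len by simp
    finally show ?thesis using lam_len by (simp add: part_def)
  qed
  have y0j: "y0 \<le> j"
  proof (rule ccontr)
    assume "\<not> y0 \<le> j"
    then have "Suc j \<le> part lam (m + Suc j)" using y0p by simp
    then have "Suc j \<le> j" unfolding j_def by (rule durfee_max)
    then show False by simp
  qed
  have bge2: "\<forall>w\<in>set b. 2 \<le> w"
  proof
    fix w assume w: "w \<in> set b"
    have "(2::enat) \<le> enat (Min (set b))" using C(6) btb by (simp add: spart_def)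
    then have "2 \<le> Min (set b)" by (simp add: numeral_eq_enat)
    moreover have "Min (set b) \<le> w" using w by simp
    ultimately show "2 \<le> w" by simp
  qed
  \<comment> \<open>first part of beta is j\<close>
  have all2: "\<forall>x\<in>set xs. 2 \<le> x"
  proof (rule ccontr)
    assume "\<not> (\<forall>x\<in>set xs. 2 \<le> x)"
    then obtain x where "x \<in> set xs" "\<not> 2 \<le> x" by auto
    then have "cnt 2 xs < length xs" unfolding cnt_def by (rule length_filter_less)
    moreover have "a ! 1 = cnt (Suc 1) xs" using la2 unfolding axs by (intro nth_conj) simp
    ultimately show False using a1 lxs by (simp add: numeral_2_eq_2)
  qed
  have pmj: "j + 2 \<le> part lam (m + j)"
  proof -
    have "m + j - 1 < length xs" using lxs C(1) by simp
    then have "xs ! (m + j - 1) \<in> set xs" by (rule nth_mem)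
    then have "2 \<le> xs ! (m + j - 1)" using all2 by blast
    moreover have "xs ! (m + j - 1) = part lam (Suc 0 + (m + j - 1)) - j"
      using C(1) unfolding xs_def by (simp del: upt_Suc)
    moreover have "Suc 0 + (m + j - 1) = m + j" using C(1) by simp
    ultimately show ?thesis by simp
  qed
  have y0eq: "y0 = j"
  proof -
    obtain k where k: "1 \<le> k" "int k - 1 - int (part lam k) = int m"
      using P(3) unfolding in_rankset_def by auto
    show ?thesis
    proof (cases "k \<le> m + j")
      case True
      have "part lam (m + j) \<le> part lam k" using part_mono[OF dl k(1) True] .
      then show ?thesis using k(2) pmj True by linarith
    next
      case False
      have "part lam k \<le> part lam (Suc (m + j))" using part_mono[OF dl _ ] False by simp
      then have "part lam k \<le> j" using y0p y0j by simp
      then have "k = Suc (m + j)" using k(2) False by linarith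
      then have "int (Suc (m + j)) - 1 - int y0 = int m" using k(2) y0p by simp
      then show ?thesis by simp
    qed
  qed
  have stb: "sorted_wrt (\<ge>) tb" using sb btb by simp
  have tbb: "\<forall>w\<in>set tb. 2 \<le> w \<and> w \<le> j" using sb btb bge2 y0eq by auto
  have ltb: "length ap + 2 \<le> length tb" using lb axy btb by simp
  have j2: "2 \<le> j"
  proof -
    obtain w r where "tb = w # r" using ltb by (cases tb) auto
    then show ?thesis using tbb by auto
  qed
  have mok: "mok m j ap tb" unfolding mok_def using sap ap0 aplt stb tbb ltb j2 assms(2) by auto
  show ?thesis
    using mok axy xy btb y0eq lam P(2) unfolding j_def a_def b_def by auto
qed

lemma P5_mem:
  assumes "mok m j ap b" "lam = build m j ((m+j)#(m+j)#ap) (j#b)" "sum_list lam = n"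
  shows "build m (Suc j) (gamL m j ap b) (delL m j ap b) \<in> P5 m n"
proof -
  have ok: "sorted_wrt (\<ge>) ap" "\<forall>x\<in>set ap. 0 < x \<and> x < m + j" "sorted_wrt (\<ge>) b"
    "\<forall>x\<in>set b. 2 \<le> x \<and> x \<le> j" "length ap + 2 \<le> length b" "2 \<le> j" "1 \<le> m"
    using assms(1) by (auto simp: mok_def)
  have bok1: "bok m j ((m+j)#(m+j)#ap) (j#b)"
    unfolding bok_def using ok by fastforce
  have sl: "sum_list lam = j * (m + j) + ((m + j) + (m + j) + sum_list ap) + (j + sum_list b)"
    using build_sum[OF bok1] assms(2) by simp
  define g where "g = gamL m j ap b"
  define d where "d = delL m j ap b"
  define M where "M = build m (Suc j) g d"
  have bokM: "bok m (Suc j) g d" unfolding g_def d_def by (rule map_facts(1)[OF assms(1)])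
  have gb: "\<forall>x\<in>set g. 0 < x \<and> x + 2 \<le> m + j" unfolding g_def by (rule map_facts(2)[OF assms(1)])
  have lgd: "length g = length d" unfolding g_def d_def by (rule map_facts(3)[OF assms(1)])
  have sgd: "sum_list g + sum_list d = sum_list ap + sum_list b + (m - 1) + j"
    unfolding g_def d_def by (rule map_facts(4)[OF assms(1)])
  have lbg: "length b \<le> length g" unfolding g_def by (rule map_facts(5)[OF assms(1)])
  have sM: "sum_list M = Suc j * (m + Suc j) + sum_list g + sum_list d"
    unfolding M_def by (rule build_sum[OF bokM])
  have ex: "Suc j * (m + Suc j) = j * (m + j) + m + 2 * j + 1" by (simp add: algebra_simps)
  have sumM: "sum_list M = n" using sM ex sgd sl assms(3) ok(7) by linarith
  have partM: "is_partition M" unfolding M_def by (rule build_partition[OF bokM])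
  have rk: "rank M = - int m"
    using build_part1[OF bokM] length_build[of m "Suc j" g d] lgd unfolding rank_def M_def by simp
  have dj: "durfee_j m M = Suc j" unfolding M_def by (rule build_durfee[OF bokM])
  have da: "durfee_alpha m M = g" unfolding M_def by (rule build_alpha[OF bokM])
  have db: "durfee_beta m M = d" unfolding M_def by (rule build_beta[OF bokM])
  have gne: "g \<noteq> []" using lbg ok(5) by auto
  then have "g ! 0 \<in> set g" by simp
  then have "g ! 0 + 2 \<le> m + j" using gb by blast
  then have pg: "int (part g 1) \<le> int m + int (Suc j) - 3" using gne by (simp add: part_def)
  have pd: "part d 1 = Suc j" by (simp add: d_def delL_def part_def)
  have "M \<in> P5 m n"
    unfolding P5_def Pneg_def partitions_def Let_def
    using partM sumM rk dj da db lgd pg pd by simp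
  then show ?thesis unfolding M_def g_def d_def .
qed

definition Phi :: "nat \<Rightarrow> nat list \<Rightarrow> nat list" where
  "Phi m lam = build m (Suc (durfee_j m lam))
     (gamL m (durfee_j m lam) (drop 2 (durfee_alpha m lam)) (tl (durfee_beta m lam)))
     (delL m (durfee_j m lam) (drop 2 (durfee_alpha m lam)) (tl (durfee_beta m lam)))"

theorem lemma4p6:
  fixes m n :: nat
  assumes "m \<ge> 1" and "n \<ge> 1"
  shows "\<exists>f. inj_on f (Q5 m n) \<and> f ` (Q5 m n) \<subseteq> P5 m n"
proof (intro exI conjI)
  show "Phi m ` Q5 m n \<subseteq> P5 m n"
  proof
    fix mu assume "mu \<in> Phi m ` Q5 m n"
    then obtain lam where lam: "lam \<in> Q5 m n" "mu = Phi m lam" by auto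
    obtain j ap b where s: "mok m j ap b" "durfee_j m lam = j" "durfee_alpha m lam = (m+j)#(m+j)#ap"
      "durfee_beta m lam = j # b" "lam = build m j ((m+j)#(m+j)#ap) (j#b)" "sum_list lam = n"
      using Q5_struct[OF lam(1) assms(1)] by blast
    have "Phi m lam = build m (Suc j) (gamL m j ap b) (delL m j ap b)"
      unfolding Phi_def s(2) s(3) s(4) by simp
    then show "mu \<in> P5 m n" using P5_mem[OF s(1) s(5) s(6)] lam(2) by simp
  qed
next
  show "inj_on (Phi m) (Q5 m n)"
  proof (rule inj_onI)
    fix l1 l2 assume l1: "l1 \<in> Q5 m n" and l2: "l2 \<in> Q5 m n" and eq: "Phi m l1 = Phi m l2"
    obtain j1 ap1 b1 where s1: "mok m j1 ap1 b1" "durfee_j m l1 = j1" "durfee_alpha m l1 = (m+j1)#(m+j1)#ap1"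
      "durfee_beta m l1 = j1 # b1" "l1 = build m j1 ((m+j1)#(m+j1)#ap1) (j1#b1)"
      using Q5_struct[OF l1 assms(1)] by blast
    obtain j2 ap2 b2 where s2: "mok m j2 ap2 b2" "durfee_j m l2 = j2" "durfee_alpha m l2 = (m+j2)#(m+j2)#ap2"
      "durfee_beta m l2 = j2 # b2" "l2 = build m j2 ((m+j2)#(m+j2)#ap2) (j2#b2)"
      using Q5_struct[OF l2 assms(1)] by blast
    have p1: "Phi m l1 = build m (Suc j1) (gamL m j1 ap1 b1) (delL m j1 ap1 b1)"
      unfolding Phi_def s1(2) s1(3) s1(4) by simp
    have p2: "Phi m l2 = build m (Suc j2) (gamL m j2 ap2 b2) (delL m j2 ap2 b2)"
      unfolding Phi_def s2(2) s2(3) s2(4) by simp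
    have B1: "bok m (Suc j1) (gamL m j1 ap1 b1) (delL m j1 ap1 b1)" by (rule map_facts(1)[OF s1(1)])
    have B2: "bok m (Suc j2) (gamL m j2 ap2 b2) (delL m j2 ap2 b2)" by (rule map_facts(1)[OF s2(1)])
    have E: "build m (Suc j1) (gamL m j1 ap1 b1) (delL m j1 ap1 b1) = build m (Suc j2) (gamL m j2 ap2 b2) (delL m j2 ap2 b2)"
      using eq p1 p2 by simp
    have jj: "j1 = j2" using build_durfee[OF B1] build_durfee[OF B2] E by simp
    have gg: "gamL m j1 ap1 b1 = gamL m j2 ap2 b2" using build_alpha[OF B1] build_alpha[OF B2] E by simp
    have dd: "delL m j1 ap1 b1 = delL m j2 ap2 b2" using build_beta[OF B1] build_beta[OF B2] E by simp
    have "ap1 = ap2 \<and> b1 = b2"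
      using map_inj[OF s1(1) s2(1)[folded jj]] gg dd jj by simp
    then show "l1 = l2" using s1(5) s2(5) jj by simp
  qed
qed

end
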